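(* Let $n\ge1$, $h>0$, and let $f$ be a real function defined at the points $x_m=mh$, $m=-n,\dots,n$; write $f_m=f(mh)$. Let $P_{2n}$ be the unique polynomial of degree at most $2n$ with $P_{2n}(mh)=f_m$ for $m=-n,\dots,n$. Then $$P_{2n}''(0)=\frac{1}{h^2}\sum_{m=1}^{n}\alpha_m^{(2)}(n)\,(f_m-2f_0+f_{-m}),\qquad\text{where } \alpha_m^{(2)}(n)=\frac{1}{m^2\,\pi_m(n)},\quad \pi_m(n)=\prod_{k=1,\,k\ne m}^{n}\left(1-\frac{m^2}{k^2}\right).$$ *)

theory Defs
  imports "HOL-Computational_Algebra.Polynomial"
begin

definition pi_coef :: "nat \<Rightarrow> nat \<Rightarrow> real" where
  "pi_coef m n = (\<Prod>k\<in>{1..n} - {m}. 1 - (real m)\<^sup>2 / (real k)\<^sup>2)"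

definition alpha2 :: "nat \<Rightarrow> nat \<Rightarrow> real" where
  "alpha2 m n = 1 / ((real m)\<^sup>2 * pi_coef m n)"

end

theory Submission imports Defs begin

lemma lagrange0:
  fixes n j :: nat assumes "j < n"
  shows "(\<Sum>m\<in>{1..n}. (real m ^ 2)^j * (\<Prod>k\<in>{1..n}-{m}. (0 - real k^2)/(real m^2 - real k^2))) = 0^j"
proof -
  define t where "t = (\<lambda>m::nat. real m ^ 2)"
  define L where "L = (\<Sum>m\<in>{1..n}. smult (t m ^ j) (\<Prod>k\<in>{1..n}-{m}. smult (1/(t m - t k)) [:- t k, 1:]))"
  have degL: "degree L \<le> n - 1"
    unfolding L_def
  proof (rule degree_sum_le)
    fix m assume m: "m \<in> {1..n}"
    have "degree (\<Prod>k\<in>{1..n}-{m}. smult (1/(t m - t k)) [:- t k, 1:]) \<le> sum (degree \<circ> (\<lambda>k. smult (1/(t m - t k)) [:- t k, 1:])) ({1..n}-{m})"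
      by (rule degree_prod_sum_le) simp
    also have "\<dots> \<le> sum (\<lambda>k. 1) ({1..n}-{m})"
      by (rule sum_mono) (auto intro: order.trans[OF degree_smult_le])
    also have "\<dots> = n - 1" using m by simp
    finally show "degree (smult (t m ^ j) (\<Prod>k\<in>{1..n}-{m}. smult (1/(t m - t k)) [:- t k, 1:])) \<le> n - 1"
      by (rule order.trans[OF degree_smult_le])
  qed simp
  have inj: "inj_on t {1..n}" unfolding t_def by (auto simp: inj_on_def)
  have tne: "t a \<noteq> t b" if "a \<noteq> b" for a b using that unfolding t_def by auto
  have evalL: "poly L (t i) = t i ^ j" if i: "i \<in> {1..n}" for i
  proof -
    have "poly L (t i) = (\<Sum>m\<in>{1..n}. t m ^ j * (\<Prod>k\<in>{1..n}-{m}. (t i - t k)/(t m - t k)))"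
      unfolding L_def by (simp add: poly_sum poly_prod algebra_simps diff_divide_distrib)
    also have "\<dots> = t i ^ j * (\<Prod>k\<in>{1..n}-{i}. (t i - t k)/(t i - t k)) + 
        (\<Sum>m\<in>{1..n}-{i}. t m ^ j * (\<Prod>k\<in>{1..n}-{m}. (t i - t k)/(t m - t k)))"
      using i by (simp add: sum.remove)
    also have "(\<Sum>m\<in>{1..n}-{i}. t m ^ j * (\<Prod>k\<in>{1..n}-{m}. (t i - t k)/(t m - t k))) = 0"
      using i by (intro sum.neutral) (auto intro!: bexI[of _ i])
    also have "(\<Prod>k\<in>{1..n}-{i}. (t i - t k)/(t i - t k)) = 1"
      by (intro prod.neutral) (auto dest: tne)
    finally show ?thesis by simp
  qed
  have "L = monom 1 j"
  proof (rule poly_eqI_degree[of "t ` {1..n}"])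
    show "poly L x = poly (monom 1 j) x" if "x \<in> t ` {1..n}" for x
      using that evalL by (auto simp: poly_monom)
    show "degree L < card (t ` {1..n})" using degL assms card_image[OF inj] by simp
    show "degree (monom 1 j :: real poly) < card (t ` {1..n})" using assms card_image[OF inj]
      by (simp add: degree_monom_eq)
  qed
  hence "poly L 0 = 0 ^ j" by (simp add: poly_monom)
  moreover have "poly L 0 = (\<Sum>m\<in>{1..n}. (real m ^ 2)^j * (\<Prod>k\<in>{1..n}-{m}. (0 - real k^2)/(real m^2 - real k^2)))"
    unfolding L_def t_def by (simp add: poly_sum poly_prod algebra_simps diff_divide_distrib)
  ultimately show ?thesis by simp
qed

lemma pisum:
  fixes n j :: nat assumes "j < n"
  shows "(\<Sum>m\<in>{1..n}. real m ^ (2*j) / pi_coef m n) = (if j = 0 then 1 else 0)"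
proof -
  have "(\<Prod>k\<in>{1..n}-{m}. (0 - real k^2)/(real m^2 - real k^2)) = 1 / pi_coef m n"
    if m: "m \<in> {1..n}" for m
  proof -
    have "1 / pi_coef m n = (\<Prod>k\<in>{1..n}-{m}. inverse (1 - (real m)\<^sup>2 / (real k)\<^sup>2))"
      unfolding pi_coef_def by (simp add: prod_inversef[symmetric] divide_inverse o_def)
    also have "\<dots> = (\<Prod>k\<in>{1..n}-{m}. (0 - real k^2)/(real m^2 - real k^2))"
    proof (intro prod.cong refl)
      fix k assume k: "k \<in> {1..n}-{m}"
      hence "real k ^ 2 \<noteq> 0" "real m ^ 2 - real k ^ 2 \<noteq> 0" by auto
      thus "inverse (1 - (real m)\<^sup>2 / (real k)\<^sup>2) = (0 - real k^2)/(real m^2 - real k^2)"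
        by (simp add: field_simps)
    qed
    finally show ?thesis by simp
  qed
  hence "(\<Sum>m\<in>{1..n}. real m ^ (2*j) / pi_coef m n) =
     (\<Sum>m\<in>{1..n}. (real m ^ 2)^j * (\<Prod>k\<in>{1..n}-{m}. (0 - real k^2)/(real m^2 - real k^2)))"
    by (intro sum.cong refl) (simp add: power_mult divide_inverse)
  also have "\<dots> = 0 ^ j" by (rule lagrange0[OF assms])
  finally show ?thesis by simp
qed

theorem mainTheorem5:
  fixes n :: nat and h :: real and f :: "real \<Rightarrow> real" and P :: "real poly"
  assumes "n \<ge> 1" and "h > 0"
    and "degree P \<le> 2 * n"
    and "\<And>m::int. - int n \<le> m \<Longrightarrow> m \<le> int n \<Longrightarrow> poly P (of_int m * h) = f (of_int m * h)"
  shows "poly (pderiv (pderiv P)) 0 =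
    (1 / h\<^sup>2) * (\<Sum>m=1..n. alpha2 m n *
        (f (real m * h) - 2 * f 0 + f (- (real m * h))))"
proof -
  define c where "c = coeff P"
  have lhs: "poly (pderiv (pderiv P)) 0 = 2 * c 2"
    by (simp add: c_def poly_0_coeff_0 coeff_pderiv numeral_2_eq_2)
  have polyP: "poly P x = (\<Sum>i\<le>2*n. c i * x^i)" for x
    unfolding poly_altdef c_def
    by (rule sum.mono_neutral_left) (use assms(3) in \<open>auto intro: coeff_eq_0\<close>)
  have f0: "f 0 = poly P 0" using assms(4)[of 0] by simp
  have fp: "f (real m * h) = poly P (real m * h)" if "m \<in> {1..n}" for m
    using assms(4)[of "int m"] that by simp
  have fm: "f (- (real m * h)) = poly P (- (real m * h))" if "m \<in> {1..n}" for m
    using assms(4)[of "- int m"] that by simp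
  define g where "g i = (\<Sum>m=1..n. alpha2 m n * (real m ^ i + (- real m) ^ i - 2 * 0 ^ i))" for i
  have step: "f (real m * h) - 2 * f 0 + f (- (real m * h)) =
     (\<Sum>i\<le>2*n. c i * h ^ i * (real m ^ i + (- real m) ^ i - 2 * 0 ^ i))" if "m \<in> {1..n}" for m
  proof -
    have "f (real m * h) - 2 * f 0 + f (- (real m * h)) =
       poly P (real m * h) - 2 * poly P 0 + poly P (- (real m * h))"
      using that by (simp add: fp fm f0)
    also have "\<dots> = (\<Sum>i\<le>2*n. c i * (real m * h) ^ i - 2 * (c i * 0 ^ i) + c i * (- (real m * h)) ^ i)"
      unfolding polyP by (simp only: sum_subtractf[symmetric] sum.distrib[symmetric] sum_distrib_left)
    also have "\<dots> = (\<Sum>i\<le>2*n. c i * h ^ i * (real m ^ i + (- real m) ^ i - 2 * 0 ^ i))"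
    proof (intro sum.cong refl)
      fix i
      have "(- (real m * h)) ^ i = (- real m) ^ i * h ^ i"
        by (simp flip: power_mult_distrib)
      moreover have "(0::real) ^ i = 0 ^ i * h ^ i" by (cases i) auto
      ultimately show "c i * (real m * h) ^ i - 2 * (c i * 0 ^ i) + c i * (- (real m * h)) ^ i =
        c i * h ^ i * (real m ^ i + (- real m) ^ i - 2 * 0 ^ i)"
        by (simp add: power_mult_distrib algebra_simps)
    qed
    finally show ?thesis .
  qed
  have gval: "g i = (if i = 2 then 2 else 0)" if "i \<le> 2*n" for i
  proof (cases "i = 0")
    case True thus ?thesis by (simp add: g_def)
  next
    case False
    show ?thesis
    proof (cases "even i")
      case False thus ?thesis using \<open>i \<noteq> 0\<close> by (auto simp add: g_def zero_power)
    next
      case True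
      then obtain j where j: "i = 2 * Suc j" using \<open>i \<noteq> 0\<close>
        by (metis dvd_def mult_0_right not0_implies_Suc)
      with that have jn: "j < n" by simp
      have "g i = 2 * (\<Sum>m\<in>{1..n}. real m ^ (2*j) / pi_coef m n)"
        unfolding g_def sum_distrib_left
      proof (intro sum.cong refl)
        fix m assume "m \<in> {1..n}"
        hence "real m \<noteq> 0" by simp
        thus "alpha2 m n * (real m ^ i + (- real m) ^ i - 2 * 0 ^ i) = 2 * (real m ^ (2 * j) / pi_coef m n)"
          unfolding alpha2_def j by (simp add: field_simps power_mult_distrib power_add power2_eq_square)
      qed
      thus ?thesis using pisum[OF jn] j by simp
    qed
  qed
  have "(\<Sum>m=1..n. alpha2 m n * (f (real m * h) - 2 * f 0 + f (- (real m * h))))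
      = (\<Sum>m=1..n. \<Sum>i\<le>2*n. c i * h ^ i * (alpha2 m n * (real m ^ i + (- real m) ^ i - 2 * 0 ^ i)))"
  proof (intro sum.cong refl)
    fix m assume "m \<in> {1..n}"
    show "alpha2 m n * (f (real m * h) - 2 * f 0 + f (- (real m * h))) =
      (\<Sum>i\<le>2*n. c i * h ^ i * (alpha2 m n * (real m ^ i + (- real m) ^ i - 2 * 0 ^ i)))"
      unfolding step[OF \<open>m \<in> {1..n}\<close>] sum_distrib_left by (simp only: ac_simps)
  qed
  also have "\<dots> = (\<Sum>i\<le>2*n. c i * h ^ i * g i)"
    unfolding g_def sum_distrib_left by (rule sum.swap)
  also have "\<dots> = (\<Sum>i\<le>2*n. if i = 2 then c 2 * h ^ 2 * 2 else 0)"
    by (intro sum.cong refl) (simp add: gval)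
  also have "\<dots> = c 2 * h^2 * 2" using assms(1) by simp
  finally show ?thesis using lhs assms(2) by simp
qed

end
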